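(* Let $G$ be a graph whose odd girth is $5$. If $E(G)=E_1\cup E_2$ with $E_1\cap E_2=\emptyset$, where $(V(G),E_1)$ is bipartite and $E_2$ is a matching, then $G$ admits an orientation in which every $5$-cycle of $G$ is alternating.
   Context: The odd girth of a graph is the length of its shortest odd cycle. An orientation assigns each edge exactly one direction. In an oriented graph, a subgraph that is a cycle is called alternating if at most one of its vertices has both positive in-degree and positive out-degree within that cycle (all others are sources or sinks of the cycle). *)

theory Defs
  imports Main
begin

definition simple_graph :: "'a set \<Rightarrow> 'a set set \<Rightarrow> bool" where
  "simple_graph V E \<longleftrightarrow> finite V \<and>
     (\<forall>e\<in>E. \<exists>u v. u \<noteq> v \<and> u \<in> V \<and> v \<in> V \<and> e = {u, v})"

definition is_cycle :: "'a set \<Rightarrow> 'a set set \<Rightarrow> 'a list \<Rightarrow> bool" where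
  "is_cycle V E c \<longleftrightarrow> length c \<ge> 3 \<and> distinct c \<and> set c \<subseteq> V \<and>
     (\<forall>i < length c. {c ! i, c ! (Suc i mod length c)} \<in> E)"

definition cycle_edges :: "'a list \<Rightarrow> 'a set set" where
  "cycle_edges c = {{c ! i, c ! (Suc i mod length c)} | i. i < length c}"

definition has_odd_girth :: "'a set \<Rightarrow> 'a set set \<Rightarrow> nat \<Rightarrow> bool" where
  "has_odd_girth V E k \<longleftrightarrow> odd k \<and> (\<exists>c. is_cycle V E c \<and> length c = k) \<and>
     (\<forall>c. is_cycle V E c \<and> odd (length c) \<longrightarrow> k \<le> length c)"

definition bipartite :: "'a set \<Rightarrow> 'a set set \<Rightarrow> bool" where
  "bipartite V E \<longleftrightarrow> (\<exists>A \<subseteq> V. \<forall>e\<in>E. \<exists>u v. e = {u, v} \<and> u \<in> A \<and> v \<in> V - A)"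

definition matching :: "'a set set \<Rightarrow> bool" where
  "matching M \<longleftrightarrow> (\<forall>e\<in>M. \<forall>f\<in>M. e \<noteq> f \<longrightarrow> e \<inter> f = {})"

definition orientation :: "'a set set \<Rightarrow> ('a \<times> 'a) set \<Rightarrow> bool" where
  "orientation E D \<longleftrightarrow> (\<forall>(u, v)\<in>D. {u, v} \<in> E) \<and>
     (\<forall>u v. u \<noteq> v \<and> {u, v} \<in> E \<longrightarrow> ((u, v) \<in> D \<longleftrightarrow> (v, u) \<notin> D))"

definition alternating :: "('a \<times> 'a) set \<Rightarrow> 'a list \<Rightarrow> bool" where
  "alternating D c \<longleftrightarrow>
     card {v \<in> set c. (\<exists>w. {w, v} \<in> cycle_edges c \<and> (w, v) \<in> D) \<and>
                       (\<exists>w. {v, w} \<in> cycle_edges c \<and> (v, w) \<in> D)} \<le> 1"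

end

theory Submission
  imports Defs
begin

definition PP :: "'a set \<Rightarrow> ('a \<Rightarrow> nat) \<Rightarrow> 'a \<Rightarrow> 'a \<Rightarrow> bool" where
  "PP A f u v \<longleftrightarrow> (u \<in> A \<and> v \<notin> A) \<or> ((u \<in> A \<longleftrightarrow> v \<in> A) \<and> f u < f v)"

definition MM :: "'a set \<Rightarrow> ('a \<Rightarrow> nat) \<Rightarrow> 'a \<Rightarrow> 'a \<Rightarrow> 'a \<Rightarrow> bool" where
  "MM A f u v w \<longleftrightarrow> (PP A f u v \<and> PP A f v w) \<or> (PP A f w v \<and> PP A f v u)"

lemma MM_cross: "(u \<in> A \<longleftrightarrow> v \<notin> A) \<Longrightarrow> (w \<in> A \<longleftrightarrow> v \<notin> A) \<Longrightarrow> \<not> MM A f u v w"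
  unfolding MM_def PP_def by auto

lemma MM_one: "(u \<in> A \<longleftrightarrow> v \<notin> A) \<Longrightarrow> (w \<in> A \<longleftrightarrow> x \<notin> A) \<Longrightarrow> f v \<noteq> f w \<Longrightarrow>
   MM A f u v w \<Longrightarrow> MM A f v w x \<Longrightarrow> False"
  unfolding MM_def PP_def by (cases "v \<in> A"; cases "w \<in> A"; auto)

lemma five_bool:
  assumes fa: "f a \<noteq> f b" "f b \<noteq> f c" "f c \<noteq> f d" "f d \<noteq> f e" "f e \<noteq> f a"
    and n1: "\<not> ((a \<in> A \<longleftrightarrow> b \<in> A) \<and> (b \<in> A \<longleftrightarrow> c \<in> A))"
    and n2: "\<not> ((b \<in> A \<longleftrightarrow> c \<in> A) \<and> (c \<in> A \<longleftrightarrow> d \<in> A))"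
    and n3: "\<not> ((c \<in> A \<longleftrightarrow> d \<in> A) \<and> (d \<in> A \<longleftrightarrow> e \<in> A))"
    and n4: "\<not> ((d \<in> A \<longleftrightarrow> e \<in> A) \<and> (e \<in> A \<longleftrightarrow> a \<in> A))"
    and n5: "\<not> ((e \<in> A \<longleftrightarrow> a \<in> A) \<and> (a \<in> A \<longleftrightarrow> b \<in> A))"
  shows "(MM A f e a b \<longrightarrow> \<not> MM A f a b c \<and> \<not> MM A f b c d \<and> \<not> MM A f c d e \<and> \<not> MM A f d e a)
       \<and> (MM A f a b c \<longrightarrow> \<not> MM A f b c d \<and> \<not> MM A f c d e \<and> \<not> MM A f d e a)
       \<and> (MM A f b c d \<longrightarrow> \<not> MM A f c d e \<and> \<not> MM A f d e a)
       \<and> (MM A f c d e \<longrightarrow> \<not> MM A f d e a)"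
  using n1 n2 n3 n4 n5 fa
  apply (cases "a \<in> A"; cases "b \<in> A"; cases "c \<in> A"; cases "d \<in> A"; cases "e \<in> A")
  by (simp_all add: MM_cross MM_one) (auto simp: MM_def PP_def)

lemma PP_antisym: "PP A f u v \<Longrightarrow> PP A f v u \<Longrightarrow> False"
  unfolding PP_def by auto

lemma mix:
  assumes "\<And>w. {w,v} \<in> S \<longleftrightarrow> w = p \<or> w = q" "\<And>w. {v,w} \<in> S \<longleftrightarrow> w = p \<or> w = q"
    and "(\<exists>w. {w,v} \<in> S \<and> PP A f w v) \<and> (\<exists>w. {v,w} \<in> S \<and> PP A f v w)"
  shows "MM A f p v q"
  using assms(3) unfolding MM_def assms(1,2) by (blast dest: PP_antisym)

lemma MM_sym: "MM A f p v q = MM A f q v p"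
  unfolding MM_def by blast

lemma five_set:
  assumes dist: "distinct [a,b,c,d,e]" and fa: "f a \<noteq> f b" "f b \<noteq> f c" "f c \<noteq> f d" "f d \<noteq> f e" "f e \<noteq> f a"
    and n1: "\<not> ((a \<in> A \<longleftrightarrow> b \<in> A) \<and> (b \<in> A \<longleftrightarrow> c \<in> A))"
    and n2: "\<not> ((b \<in> A \<longleftrightarrow> c \<in> A) \<and> (c \<in> A \<longleftrightarrow> d \<in> A))"
    and n3: "\<not> ((c \<in> A \<longleftrightarrow> d \<in> A) \<and> (d \<in> A \<longleftrightarrow> e \<in> A))"
    and n4: "\<not> ((d \<in> A \<longleftrightarrow> e \<in> A) \<and> (e \<in> A \<longleftrightarrow> a \<in> A))"
    and n5: "\<not> ((e \<in> A \<longleftrightarrow> a \<in> A) \<and> (a \<in> A \<longleftrightarrow> b \<in> A))"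
  shows "card {v \<in> {a,b,c,d,e}. (\<exists>w. {w,v} \<in> {{a,b},{b,c},{c,d},{d,e},{e,a}} \<and> PP A f w v) \<and>
            (\<exists>w. {v,w} \<in> {{a,b},{b,c},{c,d},{d,e},{e,a}} \<and> PP A f v w)} \<le> 1"
proof -
  let ?S = "{{a,b},{b,c},{c,d},{d,e},{e,a}}"
  let ?T = "{v. v = a \<and> MM A f e a b \<or> v = b \<and> MM A f a b c \<or> v = c \<and> MM A f b c d
              \<or> v = d \<and> MM A f c d e \<or> v = e \<and> MM A f d e a}"
  have nb: "\<And>w. {w,a} \<in> ?S \<longleftrightarrow> w = b \<or> w = e" "\<And>w. {w,b} \<in> ?S \<longleftrightarrow> w = a \<or> w = c"
     "\<And>w. {w,c} \<in> ?S \<longleftrightarrow> w = b \<or> w = d" "\<And>w. {w,d} \<in> ?S \<longleftrightarrow> w = c \<or> w = e"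
     "\<And>w. {w,e} \<in> ?S \<longleftrightarrow> w = d \<or> w = a"
    using dist by (auto simp: doubleton_eq_iff)
  have nb2: "\<And>w. {a,w} \<in> ?S \<longleftrightarrow> w = b \<or> w = e" "\<And>w. {b,w} \<in> ?S \<longleftrightarrow> w = a \<or> w = c"
     "\<And>w. {c,w} \<in> ?S \<longleftrightarrow> w = b \<or> w = d" "\<And>w. {d,w} \<in> ?S \<longleftrightarrow> w = c \<or> w = e"
     "\<And>w. {e,w} \<in> ?S \<longleftrightarrow> w = d \<or> w = a"
    using nb by (simp_all add: insert_commute)
  have sub: "{v \<in> {a,b,c,d,e}. (\<exists>w. {w,v} \<in> ?S \<and> PP A f w v) \<and>
            (\<exists>w. {v,w} \<in> ?S \<and> PP A f v w)} \<subseteq> ?T"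
  proof
    fix v assume v: "v \<in> {v \<in> {a,b,c,d,e}. (\<exists>w. {w,v} \<in> ?S \<and> PP A f w v) \<and>
            (\<exists>w. {v,w} \<in> ?S \<and> PP A f v w)}"
    then have vv: "v = a \<or> v = b \<or> v = c \<or> v = d \<or> v = e" by blast
    have m: "(\<exists>w. {w,v} \<in> ?S \<and> PP A f w v) \<and> (\<exists>w. {v,w} \<in> ?S \<and> PP A f v w)"
      using v by blast
    show "v \<in> ?T" using vv
    proof (elim disjE)
      assume vx: "v = a"
      have "MM A f b a e" by (rule mix[OF nb(1) nb2(1) m[unfolded vx]])
      then show ?thesis using vx MM_sym[of A f b a e] by simp
    next
      assume vx: "v = b"
      have "MM A f a b c" by (rule mix[OF nb(2) nb2(2) m[unfolded vx]])
      then show ?thesis using vx MM_sym[of A f a b c] by simp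
    next
      assume vx: "v = c"
      have "MM A f b c d" by (rule mix[OF nb(3) nb2(3) m[unfolded vx]])
      then show ?thesis using vx MM_sym[of A f b c d] by simp
    next
      assume vx: "v = d"
      have "MM A f c d e" by (rule mix[OF nb(4) nb2(4) m[unfolded vx]])
      then show ?thesis using vx MM_sym[of A f c d e] by simp
    next
      assume vx: "v = e"
      have "MM A f d e a" by (rule mix[OF nb(5) nb2(5) m[unfolded vx]])
      then show ?thesis using vx MM_sym[of A f d e a] by simp
    qed
  qed
  have "\<exists>x. ?T \<subseteq> {x}"
    using five_bool[OF fa n1 n2 n3 n4 n5] by auto
  then obtain x where x: "?T \<subseteq> {x}" by blast
  have "{v \<in> {a,b,c,d,e}. (\<exists>w. {w,v} \<in> ?S \<and> PP A f w v) \<and>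
            (\<exists>w. {v,w} \<in> ?S \<and> PP A f v w)} \<subseteq> {x}" by (rule subset_trans[OF sub x])
  then have "card {v \<in> {a,b,c,d,e}. (\<exists>w. {w,v} \<in> ?S \<and> PP A f w v) \<and>
            (\<exists>w. {v,w} \<in> ?S \<and> PP A f v w)} \<le> card {x}" by (rule card_mono[rotated]) simp
  then show ?thesis by simp
qed


lemma list5: "length xs = 5 \<Longrightarrow> \<exists>a b c d e. xs = [a,b,c,d,e]"
  by (simp add: numeral_eq_Suc length_Suc_conv) blast

lemma set5: "{g i | i. i < (5::nat)} = {g 0, g 1, g 2, g 3, g 4}"
proof -
  have "{g i | i. i < (5::nat)} = g ` {..<5}" by blast
  also have "{..<(5::nat)} = {0,1,2,3,4}" by (auto simp: numeral_eq_Suc)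
  finally show ?thesis by simp
qed

lemma adj:
  assumes "{x,y} \<in> E1 \<union> E2" "{y,z} \<in> E1 \<union> E2" "x \<noteq> z" "x \<noteq> y" "y \<noteq> z"
    and cross: "\<And>u v. {u,v} \<in> E1 \<Longrightarrow> \<not> (u \<in> A \<longleftrightarrow> v \<in> A)"
    and m: "matching E2"
  shows "\<not> ((x \<in> A \<longleftrightarrow> y \<in> A) \<and> (y \<in> A \<longleftrightarrow> z \<in> A))"
proof
  assume h: "(x \<in> A \<longleftrightarrow> y \<in> A) \<and> (y \<in> A \<longleftrightarrow> z \<in> A)"
  have n1: "{x,y} \<notin> E1"
  proof
    assume "{x,y} \<in> E1"
    from cross[OF this] h show False by simp
  qed
  have n2: "{y,z} \<notin> E1"
  proof
    assume "{y,z} \<in> E1"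
    from cross[OF this] h show False by simp
  qed
  have i1: "{x,y} \<in> E2" using assms(1) n1 by simp
  have i2: "{y,z} \<in> E2" using assms(2) n2 by simp
  have ne: "{x,y} \<noteq> {y,z}" using assms(3,4,5) by (auto simp: doubleton_eq_iff)
  have mm: "\<forall>e\<in>E2. \<forall>f\<in>E2. e \<noteq> f \<longrightarrow> e \<inter> f = {}" using m unfolding matching_def .
  have "{x,y} \<inter> {y,z} = {}" by (rule mm[rule_format, OF i1 i2 ne])
  then show False by simp
qed

theorem mainTheorem10:
  fixes V :: "'a set" and E E1 E2 :: "'a set set"
  assumes "simple_graph V E"
    and "has_odd_girth V E 5"
    and "E = E1 \<union> E2" and "E1 \<inter> E2 = {}"
    and "bipartite V E1"
    and "matching E2"
  shows "\<exists>D. orientation E D \<and>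
           (\<forall>c. is_cycle V E c \<and> length c = 5 \<longrightarrow> alternating D c)"
proof -
  obtain A where A: "\<forall>e\<in>E1. \<exists>u v. e = {u, v} \<and> u \<in> A \<and> v \<in> V - A"
    using assms(5) unfolding bipartite_def by blast
  have cross: "\<And>u v. {u,v} \<in> E1 \<Longrightarrow> \<not> (u \<in> A \<longleftrightarrow> v \<in> A)"
  proof -
    fix u v assume "{u,v} \<in> E1"
    then obtain x y where "{u,v} = {x,y}" "x \<in> A" "y \<notin> A" using A by blast
    then show "\<not> (u \<in> A \<longleftrightarrow> v \<in> A)" by (auto simp: doubleton_eq_iff)
  qed
  have finV: "finite V" using assms(1) unfolding simple_graph_def by blast
  obtain f :: "'a \<Rightarrow> nat" and n where f: "f ` V = {i. i < n}" "inj_on f V"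
    using finite_imp_inj_to_nat_seg[OF finV] by blast
  have endp: "\<And>u v. {u,v} \<in> E \<Longrightarrow> u \<in> V \<and> v \<in> V"
  proof -
    fix u v assume "{u,v} \<in> E"
    then obtain x y where "x \<in> V" "y \<in> V" "{u,v} = {x,y}"
      using assms(1) unfolding simple_graph_def by blast
    then show "u \<in> V \<and> v \<in> V" by (auto simp: doubleton_eq_iff)
  qed
  have fne: "\<And>u v. {u,v} \<in> E \<Longrightarrow> u \<noteq> v \<Longrightarrow> f u \<noteq> f v"
    using endp f(2) unfolding inj_on_def by blast
  define D where "D = {(u,v). {u,v} \<in> E \<and> PP A f u v}"
  have orient: "orientation E D"
    unfolding orientation_def
  proof (intro conjI allI impI)
    show "\<forall>(u, v)\<in>D. {u, v} \<in> E" unfolding D_def by blast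
  next
    fix u v assume h: "u \<noteq> v \<and> {u, v} \<in> E"
    then have "f u \<noteq> f v" using fne by blast
    moreover have "{v,u} \<in> E" using h by (simp add: insert_commute)
    ultimately show "((u, v) \<in> D) = ((v, u) \<notin> D)"
      using h unfolding D_def PP_def by auto
  qed
  have alt: "alternating D cl" if cl: "is_cycle V E cl" "length cl = 5" for cl
  proof -
    obtain a b c d e where ce: "cl = [a,b,c,d,e]" using list5[OF cl(2)] by blast
    have dist: "distinct [a,b,c,d,e]" using cl(1) ce unfolding is_cycle_def by blast
    have ed: "\<forall>i<5. {cl ! i, cl ! (Suc i mod 5)} \<in> E" using cl unfolding is_cycle_def by simp
    have e1: "{a,b} \<in> E" using ed[rule_format, of 0] ce by simp
    have e2: "{b,c} \<in> E" using ed[rule_format, of 1] ce by simp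
    have e3: "{c,d} \<in> E" using ed[rule_format, of 2] ce by simp
    have e4: "{d,e} \<in> E" using ed[rule_format, of 3] ce by simp
    have e5: "{e,a} \<in> E" using ed[rule_format, of 4] ce by simp
    let ?S = "{{a,b},{b,c},{c,d},{d,e},{e,a}}"
    have "cycle_edges cl = {{cl!i, cl!(Suc i mod 5)} | i. i<5}"
      unfolding cycle_edges_def cl(2) ..
    also have "\<dots> = {{cl!0, cl!(Suc 0 mod 5)}, {cl!1, cl!(Suc 1 mod 5)}, {cl!2, cl!(Suc 2 mod 5)},
       {cl!3, cl!(Suc 3 mod 5)}, {cl!4, cl!(Suc 4 mod 5)}}" by (rule set5)
    also have "\<dots> = ?S" using ce by simp
    finally have cyce: "cycle_edges cl = ?S" .
    have SE: "?S \<subseteq> E" using e1 e2 e3 e4 e5 by blast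
    have fa: "f a \<noteq> f b" "f b \<noteq> f c" "f c \<noteq> f d" "f d \<noteq> f e" "f e \<noteq> f a"
      using fne[OF e1] fne[OF e2] fne[OF e3] fne[OF e4] fne[OF e5] dist by auto
    have e5': "{a,e} \<in> E" using e5 by (simp add: insert_commute)
    have n1: "\<not> ((a \<in> A \<longleftrightarrow> b \<in> A) \<and> (b \<in> A \<longleftrightarrow> c \<in> A))"
      using adj[OF e1[unfolded assms(3)] e2[unfolded assms(3)] _ _ _ cross assms(6)] dist by auto
    have n2: "\<not> ((b \<in> A \<longleftrightarrow> c \<in> A) \<and> (c \<in> A \<longleftrightarrow> d \<in> A))"
      using adj[OF e2[unfolded assms(3)] e3[unfolded assms(3)] _ _ _ cross assms(6)] dist by auto
    have n3: "\<not> ((c \<in> A \<longleftrightarrow> d \<in> A) \<and> (d \<in> A \<longleftrightarrow> e \<in> A))"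
      using adj[OF e3[unfolded assms(3)] e4[unfolded assms(3)] _ _ _ cross assms(6)] dist by auto
    have n4: "\<not> ((d \<in> A \<longleftrightarrow> e \<in> A) \<and> (e \<in> A \<longleftrightarrow> a \<in> A))"
      using adj[OF e4[unfolded assms(3)] e5[unfolded assms(3)] _ _ _ cross assms(6)] dist by auto
    have n5: "\<not> ((e \<in> A \<longleftrightarrow> a \<in> A) \<and> (a \<in> A \<longleftrightarrow> b \<in> A))"
      using adj[OF e5[unfolded assms(3)] e1[unfolded assms(3)] _ _ _ cross assms(6)] dist by auto
    have key: "card {v \<in> {a,b,c,d,e}. (\<exists>w. {w,v} \<in> ?S \<and> PP A f w v) \<and>
            (\<exists>w. {v,w} \<in> ?S \<and> PP A f v w)} \<le> 1"
      by (rule five_set[OF dist fa n1 n2 n3 n4 n5])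
    have memD: "\<And>w v. {w,v} \<in> ?S \<Longrightarrow> (w,v) \<in> D \<longleftrightarrow> PP A f w v"
    proof -
      fix w v assume h: "{w,v} \<in> ?S"
      have "{w,v} \<in> E" using SE h by (rule subsetD)
      then show "(w,v) \<in> D \<longleftrightarrow> PP A f w v" unfolding D_def by simp
    qed
    have setc: "set cl = {a,b,c,d,e}" using ce by simp
    have ex1: "\<And>v. (\<exists>w. {w,v} \<in> ?S \<and> (w,v) \<in> D) = (\<exists>w. {w,v} \<in> ?S \<and> PP A f w v)"
      by (rule ex_cong1, rule conj_cong, rule refl, erule memD)
    have ex2: "\<And>v. (\<exists>w. {v,w} \<in> ?S \<and> (v,w) \<in> D) = (\<exists>w. {v,w} \<in> ?S \<and> PP A f v w)"
      by (rule ex_cong1, rule conj_cong, rule refl, erule memD)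
    have eqs: "{v \<in> set cl. (\<exists>w. {w, v} \<in> cycle_edges cl \<and> (w, v) \<in> D) \<and>
                       (\<exists>w. {v, w} \<in> cycle_edges cl \<and> (v, w) \<in> D)}
      = {v \<in> {a,b,c,d,e}. (\<exists>w. {w,v} \<in> ?S \<and> PP A f w v) \<and>
            (\<exists>w. {v,w} \<in> ?S \<and> PP A f v w)}"
      by (simp only: cyce setc ex1 ex2)
    show ?thesis unfolding alternating_def eqs by (rule key)
  qed
  show ?thesis
  proof (intro exI[of _ D] conjI allI impI)
    show "orientation E D" by (rule orient)
  next
    fix cl assume "is_cycle V E cl \<and> length cl = 5"
    then show "alternating D cl" using alt by blast
  qed
qed

end
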